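(* Let $u\in\mathbb{F}_q$ be such that $u^2-u+1$ is a non-square in $\mathbb{F}_q$, and let $\ell_u$ be the line $Y_3-3uY_2+3u^2Y_1-u^3Y_0=0,\ Y_1-Y_2=0$ (i.e. $\ell_u=\delta_3(\mathcal{Z}((X_1-uX_0)^3))\cap\delta_3(\mathcal{Z}(X_0X_1(X_0-X_1)))$). Then if $-3$ is a square in $\mathbb{F}_q$: $OD_2(\ell_u)=[1,0,\tfrac{q-1}{6},\tfrac{q+1}{2},\tfrac{q-1}{3}]$ and $OD_0(\ell_u)=[0,1,\tfrac{q-1}{2},\tfrac{q+1}{2},0]$; if $-3$ is a non-square in $\mathbb{F}_q$: $OD_2(\ell_u)=[1,0,\tfrac{q+1}{6},\tfrac{q-1}{2},\tfrac{q+1}{3}]$ and $OD_0(\ell_u)=[0,1,\tfrac{q-1}{2},\tfrac{q+1}{2},0]$.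
   Context: Let $q$ be a power of a prime $p\neq 2,3$. In $\mathrm{PG}(3,q)$ with coordinates $(Y_0,\dots,Y_3)$, the twisted cubic is $\mathcal{C}=\{P(t)=(1,t,t^2,t^3):t\in\mathbb{F}_q\}\cup\{P(\infty)=(0,0,0,1)\}$. Osculating planes: $\Pi(t):-t^3Y_0+3t^2Y_1-3tY_2+Y_3=0$ ($t\in\mathbb{F}_q$), $\Pi(\infty):Y_0=0$. Tangent line at $P\in\mathcal{C}$: the line through $P$ meeting $\mathcal{C}$ with multiplicity two at $P$. For a binary cubic form $f=y_{30}X_0^3+y_{21}X_0^2X_1+y_{12}X_0X_1^2+y_{03}X_1^3$, $\delta_3(\mathcal{Z}(f))$ is the plane $y_{30}Y_0+y_{21}Y_1+y_{12}Y_2+y_{03}Y_3=0$. Point classes: $\mathcal{P}_1$ = points of $\mathcal{C}$; $\mathcal{P}_2$ = points not on $\mathcal{C}$ on a tangent line; $\mathcal{P}_3$ = points not on $\mathcal{C}$ on exactly three osculating planes; $\mathcal{P}_4$ = points not on $\mathcal{C}$ on exactly one osculating plane; $\mathcal{P}_5$ = points on no osculating plane. Plane classes: $\mathcal{H}_1$ = osculating planes; $\mathcal{H}_2$ = planes meeting $\mathcal{C}$ in exactly two points; $\mathcal{H}_3$ = exactly three points; $\mathcal{H}_4$ = non-osculating planes meeting $\mathcal{C}$ in exactly one point; $\mathcal{H}_5$ = planes disjoint from $\mathcal{C}$. $OD_0(\ell)$ (resp. $OD_2(\ell)$) is the list of the numbers of points of $\ell$ in $\mathcal{P}_1,\dots,\mathcal{P}_5$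 (resp. planes through $\ell$ in $\mathcal{H}_1,\dots,\mathcal{H}_5$). *)

theory Defs
  imports Main
begin

text \<open>Homogeneous coordinates (Y0,Y1,Y2,Y3) of PG(3,q) over a finite field 'a.\<close>
type_synonym 'a vec4 = "'a \<times> 'a \<times> 'a \<times> 'a"

definition scal4 :: "'a::field \<Rightarrow> 'a vec4 \<Rightarrow> 'a vec4" where
  "scal4 c v = (case v of (a,b,d,e) \<Rightarrow> (c*a, c*b, c*d, c*e))"

definition add4 :: "'a::field vec4 \<Rightarrow> 'a vec4 \<Rightarrow> 'a vec4" where
  "add4 v w = (case v of (a,b,c,d) \<Rightarrow> case w of (a',b',c',d') \<Rightarrow> (a+a', b+b', c+c', d+d'))"

definition dot4 :: "'a::field vec4 \<Rightarrow> 'a vec4 \<Rightarrow> 'a" where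
  "dot4 h v = (case h of (h0,h1,h2,h3) \<Rightarrow> case v of (y0,y1,y2,y3) \<Rightarrow>
      h0*y0 + h1*y1 + h2*y2 + h3*y3)"

text \<open>Points of PG(3,q) are classes of nonzero coordinate vectors; planes are
  classes of nonzero coefficient vectors (plane h: h0 Y0 + ... + h3 Y3 = 0).\<close>
definition proj :: "'a::field vec4 \<Rightarrow> 'a vec4 set" where
  "proj v = {scal4 c v | c. c \<noteq> 0}"

definition PG3 :: "'a::field vec4 set set" where
  "PG3 = {proj v | v. v \<noteq> (0, 0, 0, 0)}"

definition on_plane :: "'a::field vec4 set \<Rightarrow> 'a vec4 set \<Rightarrow> bool" where
  "on_plane P H \<longleftrightarrow> (\<exists>v\<in>P. \<exists>h\<in>H. dot4 h v = 0)"

definition cubic_pt :: "'a::field \<Rightarrow> 'a vec4 set" where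
  "cubic_pt t = proj (1, t, t^2, t^3)"

definition cubic_pt_inf :: "'a::field vec4 set" where
  "cubic_pt_inf = proj (0, 0, 0, 1)"

definition twisted_cubic :: "'a::field vec4 set set" where
  "twisted_cubic = range cubic_pt \<union> {cubic_pt_inf}"

definition osc_plane :: "'a::field \<Rightarrow> 'a vec4 set" where
  "osc_plane t = proj (- (t^3), 3 * t^2, - 3 * t, 1)"

definition osc_plane_inf :: "'a::field vec4 set" where
  "osc_plane_inf = proj (1, 0, 0, 0)"

definition osc_planes :: "'a::field vec4 set set" where
  "osc_planes = range osc_plane \<union> {osc_plane_inf}"

definition span_line :: "'a::field vec4 \<Rightarrow> 'a vec4 \<Rightarrow> 'a vec4 set set" where
  "span_line v w = {P \<in> PG3. \<exists>a b. add4 (scal4 a v) (scal4 b w) \<noteq> (0,0,0,0) \<and> P = proj (add4 (scal4 a v) (scal4 b w))}"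

text \<open>Tangent line at P(t): the line through P(t) and P'(t) = (0,1,2t,3t^2)
  (the unique line meeting C with multiplicity two at P(t)); at P(\<infinity>) the
  line through (0,0,0,1) and (0,0,1,0).\<close>
definition tangent_line :: "'a::field \<Rightarrow> 'a vec4 set set" where
  "tangent_line t = span_line (1, t, t^2, t^3) (0, 1, 2*t, 3*t^2)"

definition tangent_line_inf :: "'a::field vec4 set set" where
  "tangent_line_inf = span_line (0, 0, 0, 1) (0, 0, 1, 0)"

definition tangent_lines :: "'a::field vec4 set set set" where
  "tangent_lines = range tangent_line \<union> {tangent_line_inf}"

definition n_osc :: "'a::{field,finite} vec4 set \<Rightarrow> nat" where
  "n_osc P = card {H \<in> osc_planes. on_plane P H}"

definition pt_class :: "nat \<Rightarrow> 'a::{field,finite} vec4 set set" where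
  "pt_class i = (if i = 1 then twisted_cubic
    else if i = 2 then {P \<in> PG3. P \<notin> twisted_cubic \<and> (\<exists>L\<in>tangent_lines. P \<in> L)}
    else if i = 3 then {P \<in> PG3. P \<notin> twisted_cubic \<and> n_osc P = 3}
    else if i = 4 then {P \<in> PG3. P \<notin> twisted_cubic \<and> n_osc P = 1}
    else if i = 5 then {P \<in> PG3. n_osc P = 0}
    else {})"

definition n_cubic :: "'a::{field,finite} vec4 set \<Rightarrow> nat" where
  "n_cubic H = card {P \<in> twisted_cubic. on_plane P H}"

definition pl_class :: "nat \<Rightarrow> 'a::{field,finite} vec4 set set" where
  "pl_class i = (if i = 1 then osc_planes
    else if i = 2 then {H \<in> PG3. n_cubic H = 2}
    else if i = 3 then {H \<in> PG3. n_cubic H = 3}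
    else if i = 4 then {H \<in> PG3. H \<notin> osc_planes \<and> n_cubic H = 1}
    else if i = 5 then {H \<in> PG3. n_cubic H = 0}
    else {})"

definition line_of_planes :: "'a::field vec4 \<Rightarrow> 'a vec4 \<Rightarrow> 'a vec4 set set" where
  "line_of_planes h k = {P \<in> PG3. on_plane P (proj h) \<and> on_plane P (proj k)}"

definition OD0 :: "'a::{field,finite} vec4 set set \<Rightarrow> nat list" where
  "OD0 L = map (\<lambda>i. card (L \<inter> pt_class i)) [1,2,3,4,5]"

definition OD2 :: "'a::{field,finite} vec4 set set \<Rightarrow> nat list" where
  "OD2 L = map (\<lambda>i. card {H \<in> pl_class i. \<forall>P\<in>L. on_plane P H}) [1,2,3,4,5]"

definition is_square :: "'a::field \<Rightarrow> bool" where
  "is_square x \<longleftrightarrow> (\<exists>y. x = y^2)"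

definition ell :: "'a::field \<Rightarrow> 'a vec4 set set" where
  "ell u = line_of_planes (- (u^3), 3 * u^2, - 3 * u, 1) (0, 1, -1, 0)"

end

theory Submission
  imports Defs
begin

lemma char_ne:
  assumes "CHAR('a::field) \<noteq> 2" "CHAR('a) \<noteq> 3"
  shows "(2::'a) \<noteq> 0" "(3::'a) \<noteq> 0"
proof -
  have d2: "CHAR('a) dvd 2 \<Longrightarrow> CHAR('a) = 1 \<or> CHAR('a) = 2"
    using dvd_imp_le[of "CHAR('a)" 2] by (cases "CHAR('a)") (auto simp: le_Suc_eq dvd_def elim!: )
  have d3: "CHAR('a) dvd 3 \<Longrightarrow> CHAR('a) = 1 \<or> CHAR('a) = 3"
  proof -
    assume "CHAR('a) dvd 3"
    moreover have "\<And>n::nat. n dvd 3 \<Longrightarrow> n = 1 \<or> n = 3"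
    proof -
      fix n :: nat assume n: "n dvd 3"
      hence "n \<le> 3" by (intro dvd_imp_le) auto
      hence "n = 0 \<or> n = 1 \<or> n = 2 \<or> n = 3" by presburger
      thus "n = 1 \<or> n = 3" using n by auto
    qed
    ultimately show ?thesis by blast
  qed
  have c1: "CHAR('a) \<noteq> 1"
  proof
    assume "CHAR('a) = 1"
    hence "of_nat 1 = (0::'a)" by (subst of_nat_eq_0_iff_char_dvd) simp
    thus False by simp
  qed
  show "(2::'a) \<noteq> 0"
  proof
    assume "(2::'a) = 0"
    hence "of_nat 2 = (0::'a)" by simp
    hence "CHAR('a) dvd 2" by (subst (asm) of_nat_eq_0_iff_char_dvd)
    thus False using d2 c1 assms by blast
  qed
  show "(3::'a) \<noteq> 0"
  proof
    assume "(3::'a) = 0"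
    hence "of_nat 3 = (0::'a)" by simp
    hence "CHAR('a) dvd 3" by (subst (asm) of_nat_eq_0_iff_char_dvd)
    thus False using d3 c1 assms by blast
  qed
qed

lemma scal4_simp[simp]: "scal4 c (a,b,d,e) = (c*a, c*b, c*d, c*e)"
  by (simp add: scal4_def)
lemma add4_simp[simp]: "add4 (a,b,c,d) (a',b',c',d') = (a+a', b+b', c+c', d+d')"
  by (simp add: add4_def)
lemma dot4_simp[simp]: "dot4 (h0,h1,h2,h3) (y0,y1,y2,y3) = h0*y0 + h1*y1 + h2*y2 + h3*y3"
  by (simp add: dot4_def)

lemma dot4_scal: "dot4 (scal4 c h) (scal4 d v) = c*d*dot4 h v"
  by (cases h; cases v) (auto simp: algebra_simps)

lemma self_in_proj: "v \<in> proj v"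
  unfolding proj_def by (rule CollectI, rule exI[of _ 1]) (cases v, auto)

lemma on_plane_proj: "on_plane (proj v) (proj h) \<longleftrightarrow> dot4 h v = 0"
proof
  assume "on_plane (proj v) (proj h)"
  then obtain v' h' where v': "v' \<in> proj v" and h': "h' \<in> proj h" and d: "dot4 h' v' = 0"
    unfolding on_plane_def by blast
  from v' obtain c where c: "c \<noteq> 0" "v' = scal4 c v" unfolding proj_def by blast
  from h' obtain e where e: "e \<noteq> 0" "h' = scal4 e h" unfolding proj_def by blast
  from d c e show "dot4 h v = 0" by (simp add: dot4_scal)
next
  assume "dot4 h v = 0" thus "on_plane (proj v) (proj h)"
    unfolding on_plane_def using self_in_proj by blast
qed

lemma proj_scal: "e \<noteq> 0 \<Longrightarrow> proj (scal4 e v) = proj v"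
proof -
  assume e: "e \<noteq> 0"
  have 1: "scal4 c (scal4 e v) = scal4 (c*e) v" for c by (cases v) (auto simp: algebra_simps)
  show ?thesis unfolding proj_def
  proof (rule set_eqI, rule iffI)
    fix x assume "x \<in> {scal4 c (scal4 e v) |c. c \<noteq> 0}"
    then obtain c where "c \<noteq> 0" "x = scal4 c (scal4 e v)" by blast
    thus "x \<in> {scal4 c v |c. c \<noteq> 0}" using 1 e by auto
  next
    fix x assume "x \<in> {scal4 c v |c. c \<noteq> 0}"
    then obtain c where c: "c \<noteq> 0" "x = scal4 c v" by blast
    have "x = scal4 (c/e) (scal4 e v)" using 1[of "c/e"] e c by simp
    thus "x \<in> {scal4 c (scal4 e v) |c. c \<noteq> 0}" using c e by auto
  qed
qed

lemma proj_eqD: "proj v = proj w \<Longrightarrow> \<exists>e. e \<noteq> 0 \<and> w = scal4 e v"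
  using self_in_proj[of w] unfolding proj_def by auto

lemma proj_eq_iff: "proj v = proj w \<longleftrightarrow> (\<exists>e. e \<noteq> 0 \<and> w = scal4 e v)"
  using proj_eqD proj_scal by metis

lemma proj_in_PG3: "v \<noteq> (0,0,0,0) \<Longrightarrow> proj v \<in> PG3"
  unfolding PG3_def by blast


lemma card_nonzero: "card (UNIV - {0::'a::{field,finite}}) = card (UNIV::'a set) - 1"
  by (simp add: card_Diff_singleton)

lemma pow2_nz: "(2::'a::field) \<noteq> 0 \<Longrightarrow> (4::'a) \<noteq> 0 \<and> (8::'a) \<noteq> 0 \<and> (16::'a) \<noteq> 0 \<and> (64::'a) \<noteq> 0"
  by (metis mult_2 mult_eq_0_iff numeral_Bit0)

lemma conic_square:
  fixes d m e :: "'a::{field,finite}"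
  assumes two: "(2::'a) \<noteq> 0" and e: "e \<noteq> 0" and d: "d = e^2" and m: "m \<noteq> 0"
  shows "card {(x,y). x^2 - d*y^2 = m} = card (UNIV::'a set) - 1"
proof -
  let ?C = "{(x,y). x^2 - d*y^2 = m}"
  have four: "(4::'a) \<noteq> 0" "(16::'a) \<noteq> 0" using pow2_nz[OF two] by auto
  let ?H = "{(a,b). a*b = m}"
  have bij: "bij_betw (\<lambda>(x,y). (x - e*y, x + e*y)) ?C ?H"
  proof (rule bij_betw_byWitness[where f'="\<lambda>(a,b). ((a+b)/2, (b-a)/(2*e))"])
    show "\<forall>p\<in>?C. (\<lambda>(a,b). ((a+b)/2, (b-a)/(2*e))) ((\<lambda>(x,y). (x - e*y, x + e*y)) p) = p"
      using two e by (auto simp: field_simps)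
    show "\<forall>p\<in>?H. (\<lambda>(x,y). (x - e*y, x + e*y)) ((\<lambda>(a,b). ((a+b)/2, (b-a)/(2*e))) p) = p"
      using two four e by (auto simp: field_simps)
    show "(\<lambda>(x,y). (x - e*y, x + e*y)) ` ?C \<subseteq> ?H"
      using d by (auto simp: algebra_simps power2_eq_square)
    show "(\<lambda>(a,b). ((a+b)/2, (b-a)/(2*e))) ` ?H \<subseteq> ?C"
    proof
      fix p assume "p \<in> (\<lambda>(a,b). ((a+b)/2, (b-a)/(2*e))) ` ?H"
      then obtain a b where ab: "a*b = m" "p = ((a+b)/2, (b-a)/(2*e))" by auto
      have "((a+b)/2)^2 - d*((b-a)/(2*e))^2 = a*b"
        using two four e d by (simp add: field_simps power2_eq_square)
      thus "p \<in> ?C" using ab by simp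
    qed
  qed
  have "?H = (\<lambda>a. (a, m/a)) ` (UNIV - {0})"
  proof (rule set_eqI)
    fix p :: "'a \<times> 'a" obtain a b where p: "p = (a,b)" by (cases p)
    show "p \<in> ?H \<longleftrightarrow> p \<in> (\<lambda>a. (a, m/a)) ` (UNIV - {0})"
      using m unfolding p by (auto simp: field_simps split: if_splits)
  qed
  moreover have "inj_on (\<lambda>a. (a, m/a)) (UNIV - {0})" by (auto simp: inj_on_def)
  ultimately have "card ?H = card (UNIV::'a set) - 1"
    using card_image card_nonzero by metis
  thus ?thesis using bij_betw_same_card[OF bij] by simp
qed


lemma norm1_card:
  fixes d :: "'a::{field,finite}"
  assumes two: "(2::'a) \<noteq> 0" and ns: "\<not> is_square d"
  shows "card {(x,y). x^2 - d*y^2 = 1} = card (UNIV::'a set) + 1"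
proof -
  let ?C = "{(x::'a,y). x^2 - d*y^2 = 1}"
  define \<psi> where "\<psi> t = ((1 + d*t^2)/(1 - d*t^2), 2*t/(1 - d*t^2))" for t :: 'a
  have nz: "1 - d*t^2 \<noteq> 0" for t
  proof
    assume h: "1 - d*t^2 = 0"
    hence "t \<noteq> 0" by auto
    hence "d = (1/t)^2" using h by (simp add: field_simps power2_eq_square)
    thus False using ns unfolding is_square_def by blast
  qed
  have inv: "snd (\<psi> t) / (fst (\<psi> t) + 1) = t" for t
  proof -
    have "fst (\<psi> t) + 1 = 2 / (1 - d*t^2)" using nz[of t] unfolding \<psi>_def by (simp add: field_simps)
    thus ?thesis using nz[of t] two unfolding \<psi>_def by (simp add: field_simps)
  qed
  have injpsi: "inj \<psi>" by (metis inv injI)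
  have rng: "range \<psi> \<subseteq> ?C"
  proof
    fix p assume "p \<in> range \<psi>" then obtain t where p: "p = \<psi> t" by auto
    have "((1 + d*t^2)/(1 - d*t^2))^2 - d*(2*t/(1 - d*t^2))^2 = 1"
    proof -
      have i: "(1 + d*t^2)^2 - d*(2*t)^2 = (1 - d*t^2)^2" by (simp add: algebra_simps power2_eq_square)
      have "((1 + d*t^2)/(1 - d*t^2))^2 - d*(2*t/(1 - d*t^2))^2 = ((1 + d*t^2)^2 - d*(2*t)^2)/(1 - d*t^2)^2"
        by (simp only: power_divide power_mult_distrib times_divide_eq_right diff_divide_distrib)
      also have "\<dots> = 1" using i nz[of t] by simp
      finally show ?thesis .
    qed
    thus "p \<in> ?C" unfolding p \<psi>_def by simp
  qed
  have notin: "(-1, 0) \<notin> range \<psi>"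
  proof
    assume "(-1,0) \<in> range \<psi>" then obtain t where t: "\<psi> t = (-1,0)" by auto
    hence "2*t/(1 - d*t^2) = 0" unfolding \<psi>_def by simp
    hence "t = 0" using two nz[of t] by simp
    thus False using t two unfolding \<psi>_def by (simp add: eq_neg_iff_add_eq_0)
  qed
  have cov: "?C \<subseteq> insert (-1,0) (range \<psi>)"
  proof
    fix p assume pC: "p \<in> ?C"
    obtain x y where p: "p = (x,y)" by (cases p)
    have eq: "x^2 - d*y^2 = 1" using pC p by simp
    show "p \<in> insert (-1,0) (range \<psi>)"
    proof (cases "x = -1")
      case True
      hence "d*y^2 = 0" using eq by simp
      moreover have "d \<noteq> 0" using ns unfolding is_square_def by auto
      ultimately have "y = 0" by simp
      thus ?thesis using True p by simp
    next
      case False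
      hence x1: "x + 1 \<noteq> 0" using eq_neg_iff_add_eq_0 by blast
      define t where "t = y/(x+1)"
      have a: "1 - d*t^2 = 2/(x+1)"
      proof -
        have "1 - d*t^2 = ((x+1)^2 - d*y^2)/(x+1)^2" using x1 unfolding t_def by (simp add: field_simps)
        also have "(x+1)^2 - d*y^2 = 2*(x+1)" using eq by (simp add: algebra_simps power2_eq_square)
        also have "(2*(x+1))/(x+1)^2 = 2/(x+1)"
          unfolding power2_eq_square using nonzero_mult_divide_mult_cancel_right[OF x1, of 2 "x+1"] .
        finally show ?thesis .
      qed
      have "\<psi> t = (x,y)"
      proof -
        have "2*t/(1 - d*t^2) = 2*t/(2/(x+1))" by (simp only: a)
        also have "\<dots> = t*(x+1)" using two x1 by simp
        also have "\<dots> = y" unfolding t_def using x1 by simp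
        finally have "2*t/(1 - d*t^2) = y" .
        moreover have "(1 + d*t^2)/(1 - d*t^2) = x"
        proof -
          have "1 + d*t^2 = 2 - (1 - d*t^2)" by simp
          hence "(1 + d*t^2)/(1 - d*t^2) = 2/(1 - d*t^2) - 1" using nz[of t] by (simp add: field_simps)
          also have "\<dots> = 2/(2/(x+1)) - 1" by (simp only: a)
          also have "\<dots> = x" using x1 two by (simp add: field_simps)
          finally show ?thesis .
        qed
        ultimately show ?thesis unfolding \<psi>_def by simp
      qed
      thus ?thesis using p by (metis insertI2 rangeI)
    qed
  qed
  have "?C = insert (-1,0) (range \<psi>)"
  proof
    show "insert (-1, 0) (range \<psi>) \<subseteq> ?C" using rng eq_neg_iff_add_eq_0 by auto
  qed (rule cov)
  hence "card ?C = card (range \<psi>) + 1" using notin by simp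
  also have "card (range \<psi>) = card (UNIV::'a set)" using injpsi card_image by blast
  finally show ?thesis .
qed


lemma div_norm: "((a::'a::field)/m)^2 - d*(b/m)^2 = (a^2 - d*b^2)/m^2"
  by (simp add: power_divide diff_divide_distrib)

lemma norm_transport:
  fixes d m :: "'a::{field,finite}"
  assumes m: "m \<noteq> 0" and p0: "x0^2 - d*y0^2 = m"
  shows "card {(x,y). x^2 - d*y^2 = m} = card {(x,y). x^2 - d*y^2 = (1::'a)}"
proof -
  let ?C1 = "{(x::'a,y). x^2 - d*y^2 = 1}" and ?Cm = "{(x::'a,y). x^2 - d*y^2 = m}"
  define g where "g = (\<lambda>(x,y). (x*x0 + d*y*y0, x*y0 + y*x0))"
  define h where "h = (\<lambda>(X,Y). ((X*x0 - d*Y*y0)/m, (Y*x0 - X*y0)/m))"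
  have nid: "(x*x0 + d*y*y0)^2 - d*(x*y0 + y*x0)^2 = (x^2 - d*y^2)*(x0^2 - d*y0^2)" for x y
    by (simp add: algebra_simps power2_eq_square)
  have hg: "h (g p) = p" for p
  proof -
    obtain x y where p: "p = (x,y)" by (cases p)
    have "(x*x0 + d*y*y0)*x0 - d*(x*y0 + y*x0)*y0 = x*(x0^2 - d*y0^2)"
      by (simp add: algebra_simps power2_eq_square)
    moreover have "(x*y0 + y*x0)*x0 - (x*x0 + d*y*y0)*y0 = y*(x0^2 - d*y0^2)"
      by (simp add: algebra_simps power2_eq_square)
    ultimately show ?thesis using m p0 unfolding p g_def h_def by simp
  qed
  have gh: "g (h p) = p" for p
  proof -
    obtain X Y where p: "p = (X,Y)" by (cases p)
    have "(X*x0 - d*Y*y0)*x0 + d*(Y*x0 - X*y0)*y0 = X*(x0^2 - d*y0^2)"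
      by (simp add: algebra_simps power2_eq_square)
    moreover have "(X*x0 - d*Y*y0)*y0 + (Y*x0 - X*y0)*x0 = Y*(x0^2 - d*y0^2)"
      by (simp add: algebra_simps power2_eq_square)
    ultimately have "(X*x0 - d*Y*y0)/m*x0 + d*((Y*x0 - X*y0)/m)*y0 = X"
       and "(X*x0 - d*Y*y0)/m*y0 + (Y*x0 - X*y0)/m*x0 = Y"
      using m p0 by (simp_all add: field_simps)
    thus ?thesis unfolding p g_def h_def by (simp add: mult.assoc)
  qed
  have "bij_betw g ?C1 ?Cm"
  proof (rule bij_betw_byWitness[where f'=h])
    show "\<forall>a\<in>?C1. h (g a) = a" using hg by blast
    show "\<forall>a\<in>?Cm. g (h a) = a" using gh by blast
    show "g ` ?C1 \<subseteq> ?Cm" unfolding g_def using nid p0 by auto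
    show "h ` ?Cm \<subseteq> ?C1"
    proof
      fix p assume "p \<in> h ` ?Cm"
      then obtain X Y where XY: "X^2 - d*Y^2 = m" "p = h (X,Y)" by auto
      have "(X*x0 - d*Y*y0)^2 - d*(Y*x0 - X*y0)^2 = (X^2 - d*Y^2)*(x0^2 - d*y0^2)"
        by (simp add: algebra_simps power2_eq_square)
      hence i: "(X*x0 - d*Y*y0)^2 - d*(Y*x0 - X*y0)^2 = m*m" using XY p0 by simp
      have "((X*x0 - d*Y*y0)/m)^2 - d*((Y*x0 - X*y0)/m)^2 = ((X*x0 - d*Y*y0)^2 - d*(Y*x0 - X*y0)^2)/m^2"
        by (rule div_norm)
      also have "\<dots> = 1" using i m by (simp add: power2_eq_square)
      finally have "((X*x0 - d*Y*y0)/m)^2 - d*((Y*x0 - X*y0)/m)^2 = 1" .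
      thus "p \<in> ?C1" using XY unfolding h_def by simp
    qed
  qed
  thus ?thesis using bij_betw_same_card by metis
qed

lemma conic_nonsquare:
  fixes d m :: "'a::{field,finite}"
  assumes two: "(2::'a) \<noteq> 0" and ns: "\<not> is_square d" and m: "m \<noteq> 0"
  shows "card {(x,y). x^2 - d*y^2 = m} = card (UNIV::'a set) + 1"
proof -
  define C where "C m = {(x::'a,y). x^2 - d*y^2 = m}" for m
  define q where "q = card (UNIV::'a set)"
  have C1: "card (C 1) = q + 1" using norm1_card[OF two ns] unfolding C_def q_def .
  have Cm: "m \<noteq> 0 \<Longrightarrow> C m \<noteq> {} \<Longrightarrow> card (C m) = q + 1" for m
  proof -
    assume "m \<noteq> 0" "C m \<noteq> {}"
    then obtain x0 y0 where "x0^2 - d*y0^2 = m" unfolding C_def by auto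
    thus ?thesis using norm_transport[OF \<open>m \<noteq> 0\<close>] C1 unfolding C_def by metis
  qed
  have C0: "C 0 = {(0,0)}"
  proof -
    have "x^2 - d*y^2 = 0 \<Longrightarrow> x = 0 \<and> y = 0" for x y
    proof (rule ccontr)
      assume h: "x^2 - d*y^2 = 0" "\<not> (x = 0 \<and> y = 0)"
      have "y \<noteq> 0" using h by auto
      hence "d = (x/y)^2" using h by (simp add: field_simps power2_eq_square)
      thus False using ns unfolding is_square_def by blast
    qed
    thus ?thesis unfolding C_def by auto
  qed
  have sum: "(\<Sum>m\<in>UNIV. card (C m)) = q*q"
  proof -
    have "(\<Sum>m\<in>UNIV. card (C m)) = (\<Sum>m\<in>UNIV. \<Sum>p\<in>{p\<in>UNIV. (\<lambda>(x,y). x^2 - d*y^2) p = m}. 1)"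
      unfolding C_def by (intro sum.cong) (auto simp: case_prod_unfold)
    also have "\<dots> = (\<Sum>p\<in>(UNIV::('a\<times>'a) set). 1)"
      by (rule sum.group) auto
    also have "\<dots> = q*q" unfolding q_def by (simp add: card_cartesian_product flip: UNIV_Times_UNIV)
    finally show ?thesis .
  qed
  define M where "M = {m. m \<noteq> 0 \<and> C m \<noteq> {}}"
  have q1: "q \<ge> 1" unfolding q_def by (simp add: Suc_le_eq finite_UNIV_card_ge_0)
  have "(\<Sum>m\<in>UNIV. card (C m)) = card (C 0) + (\<Sum>m\<in>UNIV - {0}. card (C m))"
    by (simp add: sum.remove)
  also have "(\<Sum>m\<in>UNIV - {0}. card (C m)) = (\<Sum>m\<in>UNIV - {0}. if m \<in> M then q + 1 else 0)"
    by (intro sum.cong) (auto simp: M_def Cm)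
  also have "\<dots> = (q+1) * card M"
  proof -
    have "(UNIV - {0}) \<inter> M = M" by (auto simp: M_def)
    thus ?thesis by (simp add: sum.If_cases algebra_simps)
  qed
  finally have e: "q*q = 1 + (q+1) * card M" using sum C0 by simp
  have "(q+1)*(q-1) + 1 = q*q" using q1 by (cases q) auto
  hence "(q+1) * card M = (q+1)*(q-1)" using e by simp
  hence cM: "card M = q - 1" by (metis add_gr_0 less_numeral_extra(1) mult_cancel1 not_gr0)
  have "M = UNIV - {0}"
  proof (rule card_subset_eq)
    show "M \<subseteq> UNIV - {0}" unfolding M_def by auto
    show "card M = card (UNIV - {0::'a})" using cM card_nonzero unfolding q_def by metis
  qed simp
  hence "m \<in> M" using m by auto
  thus ?thesis using Cm m unfolding M_def C_def q_def by blast
qed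

lemma conic_count:
  fixes d m :: "'a::{field,finite}"
  assumes two: "(2::'a) \<noteq> 0" and d: "d \<noteq> 0" and m: "m \<noteq> 0"
  shows "card {(x,y). x^2 - d*y^2 = m} = (if is_square d then card (UNIV::'a set) - 1 else card (UNIV::'a set) + 1)"
proof (cases "is_square d")
  case True
  then obtain e where e: "d = e^2" unfolding is_square_def by blast
  hence "e \<noteq> 0" using d by auto
  thus ?thesis using conic_square[OF two _ e m] True by simp
next
  case False thus ?thesis using conic_nonsquare[OF two False m] by simp
qed


lemma card_option:
  "card {x::'b::finite option. P x} = card {s. P (Some s)} + (if P None then 1 else 0)"
proof -
  have eq: "{x. P x} = Some ` {s. P (Some s)} \<union> (if P None then {None} else {})"
  proof (rule set_eqI)
    fix x :: "'b option"
    show "x \<in> {x. P x} \<longleftrightarrow> x \<in> Some ` {s. P (Some s)} \<union> (if P None then {None} else {})"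
      by (cases x) auto
  qed
  have "card (Some ` {s. P (Some s)} \<union> (if P None then {None} else {})) =
        card (Some ` {s. P (Some s)}) + card (if P None then {None} else ({}::'b option set))"
    by (rule card_Un_disjoint) auto
  thus ?thesis unfolding eq by (simp add: card_image)
qed

lemma scal4_nz: "e \<noteq> 0 \<Longrightarrow> v \<noteq> (0,0,0,0) \<Longrightarrow> scal4 e v \<noteq> (0,0,0,0)"
  by (cases v) auto

lemma proj_in_span_line:
  assumes "v \<noteq> (0,0,0,0)"
  shows "proj v \<in> span_line w1 w2 \<longleftrightarrow> (\<exists>a b e. e \<noteq> 0 \<and> add4 (scal4 a w1) (scal4 b w2) = scal4 e v)"
proof
  assume "proj v \<in> span_line w1 w2"
  then obtain a b where "proj v = proj (add4 (scal4 a w1) (scal4 b w2))"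
    unfolding span_line_def by blast
  thus "\<exists>a b e. e \<noteq> 0 \<and> add4 (scal4 a w1) (scal4 b w2) = scal4 e v"
    using proj_eqD by blast
next
  assume "\<exists>a b e. e \<noteq> 0 \<and> add4 (scal4 a w1) (scal4 b w2) = scal4 e v"
  then obtain a b e where e: "e \<noteq> 0" "add4 (scal4 a w1) (scal4 b w2) = scal4 e v" by blast
  have "proj v = proj (add4 (scal4 a w1) (scal4 b w2))" using e proj_scal by metis
  moreover have "add4 (scal4 a w1) (scal4 b w2) \<noteq> (0,0,0,0)" using e scal4_nz assms by metis
  ultimately show "proj v \<in> span_line w1 w2"
    unfolding span_line_def using proj_in_PG3 assms by blast
qed

definition cv :: "'a::field option \<Rightarrow> 'a vec4" where
  "cv x = (case x of Some t \<Rightarrow> (1, t, t^2, t^3) | None \<Rightarrow> (0,0,0,1))"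

definition ov :: "'a::field option \<Rightarrow> 'a vec4" where
  "ov x = (case x of Some t \<Rightarrow> (- (t^3), 3 * t^2, - 3 * t, 1) | None \<Rightarrow> (1,0,0,0))"

lemma cv_simps[simp]: "cv (Some t) = (1, t, t^2, t^3)" "cv None = (0,0,0,1)"
  by (auto simp: cv_def)
lemma ov_simps[simp]: "ov (Some t) = (- (t^3), 3 * t^2, - 3 * t, 1)" "ov None = (1,0,0,0)"
  by (auto simp: ov_def)

lemma range_option: "range (g :: 'b option \<Rightarrow> 'c) = range (\<lambda>t. g (Some t)) \<union> {g None}"
proof (rule set_eqI)
  fix y show "y \<in> range g \<longleftrightarrow> y \<in> range (\<lambda>t. g (Some t)) \<union> {g None}"
  proof
    assume "y \<in> range g" then obtain x where "y = g x" by auto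
    thus "y \<in> range (\<lambda>t. g (Some t)) \<union> {g None}" by (cases x) auto
  qed auto
qed

lemma twisted_cubic_eq: "twisted_cubic = range (\<lambda>x. proj (cv x))"
  unfolding twisted_cubic_def cubic_pt_def[abs_def] cubic_pt_inf_def range_option[of "\<lambda>x. proj (cv x)"]
  by simp

lemma osc_planes_eq: "osc_planes = range (\<lambda>x. proj (ov x))"
  unfolding osc_planes_def osc_plane_def[abs_def] osc_plane_inf_def range_option[of "\<lambda>x. proj (ov x)"]
  by simp

lemma inj_cv: "inj (\<lambda>x::'a::field option. proj (cv x))"
proof (rule injI)
  fix x y :: "'a option" assume "proj (cv x) = proj (cv y)"
  then obtain e where e: "e \<noteq> 0" "cv y = scal4 e (cv x)" using proj_eqD by blast
  show "x = y"
    using e by (cases x; cases y) auto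
qed

lemma inj_ov:
  assumes three: "(3::'a::field) \<noteq> 0"
  shows "inj (\<lambda>x::'a option. proj (ov x))"
proof (rule injI)
  fix x y :: "'a option" assume "proj (ov x) = proj (ov y)"
  then obtain e where e: "e \<noteq> 0" "ov y = scal4 e (ov x)" using proj_eqD by blast
  show "x = y"
    using e three by (cases x; cases y) auto
qed

lemma cv_nz: "cv x \<noteq> (0,0,0,0)" by (cases x) auto
lemma ov_nz: "ov x \<noteq> (0,0,0,0)" by (cases x) auto

lemma card_range_filter:
  assumes "inj f" shows "card {P \<in> range f. Q P} = card {x. Q (f x)}"
proof -
  have "{P \<in> range f. Q P} = f ` {x. Q (f x)}" by auto
  thus ?thesis using inj_on_subset[OF assms subset_UNIV] by (simp add: card_image)
qed

lemma n_cubic_proj: "n_cubic (proj g) = card {x. dot4 g (cv x) = 0}"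
  unfolding n_cubic_def twisted_cubic_eq card_range_filter[OF inj_cv] on_plane_proj ..

lemma n_osc_proj:
  assumes three: "(3::'a::{field,finite}) \<noteq> 0"
  shows "n_osc (proj (v::'a vec4)) = card {x. dot4 (ov x) v = 0}"
  unfolding n_osc_def osc_planes_eq card_range_filter[OF inj_ov[OF three]] on_plane_proj ..

lemma sq_roots_card:
  fixes a :: "'a::{field,finite}"
  assumes two: "(2::'a) \<noteq> 0" and a: "a \<noteq> 0"
  shows "card {y. y^2 = a} = (if is_square a then 2 else 0)"
proof (cases "is_square a")
  case True
  then obtain z where z: "a = z^2" unfolding is_square_def by blast
  hence z0: "z \<noteq> 0" using a by auto
  have "{y. y^2 = a} = {z, -z}"
    using z by (auto simp: power2_eq_iff)
  moreover have "z \<noteq> -z" using z0 two by (metis add_eq_0_iff2 mult_2 mult_eq_0_iff eq_neg_iff_add_eq_0)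
  ultimately show ?thesis using True by simp
next
  case False
  hence "{y. y^2 = a} = {}" unfolding is_square_def by auto
  thus ?thesis using False by simp
qed


locale setting =
  fixes u :: "'a::{field,finite}"
  assumes two: "(2::'a) \<noteq> 0" and three: "(3::'a) \<noteq> 0"
    and nsq: "\<not> is_square (u^2 - u + 1)"
begin

lemma e_nz: "u^2 - u + 1 \<noteq> 0" using nsq unfolding is_square_def by (metis power_zero_numeral)
lemma u_nz: "u \<noteq> 0" using nsq unfolding is_square_def by (metis add_0 diff_self one_power2 power_zero_numeral) 
lemma u_n1: "u \<noteq> 1" using nsq unfolding is_square_def by (metis cancel_comm_monoid_add_class.diff_cancel diff_add_cancel one_power2 power_one)

definition lv :: "'a option \<Rightarrow> 'a vec4" where
  "lv x = (case x of Some s \<Rightarrow> (1, s, s, u^3 + 3*u*(1-u)*s) | None \<Rightarrow> (0,1,1,3*u*(1-u)))"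

lemma lv_simps[simp]: "lv (Some s) = (1, s, s, u^3 + 3*u*(1-u)*s)" "lv None = (0,1,1,3*u*(1-u))"
  by (auto simp: lv_def)

lemma lv_nz: "lv x \<noteq> (0,0,0,0)" by (cases x) auto

lemma ell_eq: "ell u = range (\<lambda>x. proj (lv x))"
proof (rule set_eqI, rule iffI)
  fix P assume "P \<in> ell u"
  then obtain v where v: "v \<noteq> (0,0,0,0)" "P = proj v"
      "on_plane (proj v) (proj (- (u^3), 3 * u^2, - 3 * u, 1))" "on_plane (proj v) (proj (0, 1, -1, 0))"
    unfolding ell_def line_of_planes_def PG3_def by blast
  hence v34: "dot4 (- (u^3), 3 * u^2, - 3 * u, 1) v = 0" "dot4 (0, 1, -1, 0) v = 0"
    unfolding on_plane_proj by blast+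
  obtain a b c d where abcd: "v = (a,b,c,d)" by (cases v)
  have bc: "c = b" using v34(2) abcd by simp
  have dd: "d = u^3*a + 3*u*(1-u)*b" using v34(1) abcd bc by (simp add: algebra_simps power2_eq_square power3_eq_cube)
  show "P \<in> range (\<lambda>x. proj (lv x))"
  proof (cases "a = 0")
    case True
    hence "b \<noteq> 0" using v(1) abcd bc dd by auto
    hence "v = scal4 b (lv None)" using True abcd bc dd by (simp add: algebra_simps)
    hence "P = proj (lv None)" using v(2) proj_scal \<open>b \<noteq> 0\<close> by metis
    thus ?thesis by blast
  next
    case False
    hence "v = scal4 a (lv (Some (b/a)))" using abcd bc dd by (simp add: algebra_simps)
    hence "P = proj (lv (Some (b/a)))" using v(2) proj_scal False by metis
    thus ?thesis by blast
  qed
next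
  fix P assume "P \<in> range (\<lambda>x. proj (lv x))"
  then obtain x where x: "P = proj (lv x)" by blast
  have "dot4 (- (u^3), 3 * u^2, - 3 * u, 1) (lv x) = 0" "dot4 (0, 1, -1, 0) (lv x) = 0"
    by (cases x; simp add: algebra_simps power2_eq_square power3_eq_cube)+
  thus "P \<in> ell u" unfolding ell_def line_of_planes_def using x proj_in_PG3[OF lv_nz]
    by (simp add: on_plane_proj)
qed

lemma inj_lv: "inj (\<lambda>x. proj (lv x))"
proof (rule injI)
  fix x y assume "proj (lv x) = proj (lv y)"
  then obtain e where e: "e \<noteq> 0" "lv y = scal4 e (lv x)" using proj_eqD by blast
  show "x = y" using e by (cases x; cases y) auto
qed

lemma card_ell: "card (ell u \<inter> X) = card {x. proj (lv x) \<in> X}"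
proof -
  have "ell u \<inter> X = {P \<in> range (\<lambda>x. proj (lv x)). P \<in> X}" unfolding ell_eq by auto
  thus ?thesis using card_range_filter[OF inj_lv] by simp
qed

end

context setting begin

definition G :: "'a \<Rightarrow> 'a \<Rightarrow> 'a" where "G s t = t^2 + (u - 3*s)*t + u^2 - 3*s*(u-1)"
definition D :: "'a \<Rightarrow> 'a" where "D s = 9*s^2 + (6*u-12)*s - 3*u^2"

lemma four_nz: "(4::'a) \<noteq> 0" using pow2_nz[OF two] by auto

lemma G_iff: "G s t = 0 \<longleftrightarrow> (2*t + u - 3*s)^2 = D s"
proof -
  have "4 * G s t = (2*t + u - 3*s)^2 - D s"
    unfolding G_def D_def by (simp add: algebra_simps power2_eq_square)
  thus ?thesis using four_nz by (metis eq_iff_diff_eq_0 mult_eq_0_iff)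
qed

lemma D_nz: "D s \<noteq> 0"
proof
  assume h: "D s = 0"
  have "D s = (3*s + u - 2)^2 - 4*(u^2 - u + 1)"
    unfolding D_def by (simp add: algebra_simps power2_eq_square)
  hence "u^2 - u + 1 = ((3*s + u - 2)/2)^2"
    using h four_nz two by (simp add: power_divide)
  thus False using nsq unfolding is_square_def by blast
qed

lemma dot_ovS_lvS: "dot4 (ov (Some t)) (lv (Some s)) = - ((t - u) * G s t)"
  unfolding G_def by (simp add: algebra_simps power2_eq_square power3_eq_cube)

lemma n_osc_S: "n_osc (proj (lv (Some s))) = (if is_square (D s) then (if G s u = 0 then 2 else 3) else 1)"
proof -
  have "n_osc (proj (lv (Some s))) = card {x. dot4 (ov x) (lv (Some s)) = 0}"
    by (rule n_osc_proj[OF three])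
  also have "\<dots> = card {t. dot4 (ov (Some t)) (lv (Some s)) = 0}"
    by (subst card_option) simp
  also have "{t. dot4 (ov (Some t)) (lv (Some s)) = 0} = insert u {t. G s t = 0}"
    unfolding dot_ovS_lvS by auto
  finally have n: "n_osc (proj (lv (Some s))) = card (insert u {t. G s t = 0})" .
  show ?thesis
  proof (cases "is_square (D s)")
    case False
    have "G s t \<noteq> 0" for t
    proof
      assume "G s t = 0" hence "D s = (2*t + u - 3*s)^2" by (simp add: G_iff)
      thus False using False unfolding is_square_def by blast
    qed
    hence "{t. G s t = 0} = {}" by auto
    thus ?thesis using n False by simp
  next
    case True
    then obtain y where y: "D s = y^2" unfolding is_square_def by blast
    hence y0: "y \<noteq> 0" using D_nz by auto
    define r1 where "r1 = (y - u + 3*s)/2"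
    define r2 where "r2 = (- y - u + 3*s)/2"
    have "{t. G s t = 0} = {r1, r2}"
    proof (rule set_eqI)
      fix t
      have "G s t = 0 \<longleftrightarrow> 2*t + u - 3*s = y \<or> 2*t + u - 3*s = -y"
        unfolding G_iff y by (simp add: power2_eq_iff)
      also have "\<dots> \<longleftrightarrow> t = r1 \<or> t = r2"
        unfolding r1_def r2_def using two by (auto simp: field_simps)
      finally show "t \<in> {t. G s t = 0} \<longleftrightarrow> t \<in> {r1, r2}" by simp
    qed
    moreover have "r1 \<noteq> r2"
    proof
      assume "r1 = r2"
      hence "2*y = 0" unfolding r1_def r2_def using two four_nz by (simp add: field_simps)
      thus False using y0 two by simp
    qed
    ultimately show ?thesis using n True by (auto simp: card_insert_if)
  qed
qed

lemma n_osc_N: "n_osc (proj (lv None)) = (if 2*u = 1 then 2 else 3)"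
proof -
  have "n_osc (proj (lv None)) = card {x. dot4 (ov x) (lv None) = 0}"
    by (rule n_osc_proj[OF three])
  also have "\<dots> = card {t. dot4 (ov (Some t)) (lv None) = 0} + 1"
    by (subst card_option) simp
  also have "{t. dot4 (ov (Some t)) (lv None) = 0} = {u, 1 - u}"
  proof -
    have "dot4 (ov (Some t)) (lv None) = 3*((t - u)*(t - (1 - u)))" for t
      by (simp add: algebra_simps power2_eq_square)
    thus ?thesis using three by auto
  qed
  finally show ?thesis by (auto simp: card_insert_if)
qed

lemma not_cubic: "proj (lv x) \<notin> twisted_cubic"
proof
  assume "proj (lv x) \<in> twisted_cubic"
  then obtain y where "proj (lv x) = proj (cv y)" unfolding twisted_cubic_eq by blast
  then obtain e where e: "e \<noteq> 0" "cv y = scal4 e (lv x)" using proj_eqD by blast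
  show False
  proof (cases x)
    case None thus False using e by (cases y) auto
  next
    case (Some s)
    show False
    proof (cases y)
      case None thus False using e Some by auto
    next
      case (Some t)
      hence h: "e = 1" "t = s" "t^2 = s" "t^3 = u^3 + 3*u*(1-u)*s" using e \<open>x = Some s\<close> by auto
      hence "s*(s - 1) = 0" by (simp add: algebra_simps power2_eq_square)
      hence "s = 0 \<or> s = 1" by auto
      thus False
      proof
        assume "s = 0" thus False using h u_nz by simp
      next
        assume "s = 1"
        hence "(u - 1)^3 = 0" using h by (simp add: algebra_simps power2_eq_square power3_eq_cube)
        thus False using u_n1 by simp
      qed
    qed
  qed
qed

end

context setting begin

lemma tangent_iff:
  "(\<exists>L\<in>tangent_lines. proj (lv x) \<in> L) \<longleftrightarrow>
   (\<exists>t a b e. e \<noteq> 0 \<and> add4 (scal4 a (1, t, t^2, t^3)) (scal4 b (0, 1, 2*t, 3*t^2)) = scal4 e (lv x))"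
proof -
  have inf: "proj (lv x) \<notin> tangent_line_inf"
  proof
    assume "proj (lv x) \<in> tangent_line_inf"
    then obtain a b e where "e \<noteq> 0" "add4 (scal4 a (0,0,0,1)) (scal4 b (0,0,1,0)) = scal4 e (lv x)"
      unfolding tangent_line_inf_def proj_in_span_line[OF lv_nz] by blast
    thus False by (cases x) auto
  qed
  have "(\<exists>L\<in>tangent_lines. proj (lv x) \<in> L) \<longleftrightarrow> (\<exists>t. proj (lv x) \<in> tangent_line t)"
    using inf unfolding tangent_lines_def by blast
  also have "\<dots> \<longleftrightarrow> (\<exists>t a b e. e \<noteq> 0 \<and> add4 (scal4 a (1, t, t^2, t^3)) (scal4 b (0, 1, 2*t, 3*t^2)) = scal4 e (lv x))"
    unfolding tangent_line_def proj_in_span_line[OF lv_nz] ..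
  finally show ?thesis .
qed

lemma quartic_root:
  assumes E1: "s*(1 - 2*t) + t^2 = 0" and E2: "u^3 + 3*u*(1-u)*s - 3*s*t^2 + 2*t^3 = 0"
  shows "t = u"
proof -
  have "(t - u)^2 * (t^2 + (2*u - 2)*t - u) = (2*t - 1)*(u^3 + 3*u*(1-u)*s - 3*s*t^2 + 2*t^3) + (3*u*(1-u) - 3*t^2)*(s*(1 - 2*t) + t^2)"
    by (simp add: algebra_simps power2_eq_square power3_eq_cube)
  hence "(t - u)^2 * (t^2 + (2*u - 2)*t - u) = 0" using E1 E2 by simp
  moreover have "t^2 + (2*u - 2)*t - u \<noteq> 0"
  proof
    assume "t^2 + (2*u - 2)*t - u = 0"
    moreover have "t^2 + (2*u - 2)*t - u = (t + u - 1)^2 - (u^2 - u + 1)"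
      by (simp add: algebra_simps power2_eq_square)
    ultimately have "u^2 - u + 1 = (t + u - 1)^2" by simp
    thus False using nsq unfolding is_square_def by blast
  qed
  ultimately show ?thesis by simp
qed

lemma tangent_S: "(\<exists>L\<in>tangent_lines. proj (lv (Some s)) \<in> L) \<longleftrightarrow> G s u = 0"
proof -
  have Gu: "G s u = 3*(u^2 - s*(2*u - 1))" unfolding G_def by (simp add: algebra_simps power2_eq_square)
  show ?thesis
  proof
    assume "\<exists>L\<in>tangent_lines. proj (lv (Some s)) \<in> L"
    then obtain t a b e where e: "e \<noteq> 0"
      "add4 (scal4 a (1, t, t^2, t^3)) (scal4 b (0, 1, 2*t, 3*t^2)) = scal4 e (lv (Some s))"
      unfolding tangent_iff by blast
    hence h: "a = e" "a*t + b = e*s" "a*t^2 + b*(2*t) = e*s" "a*t^3 + b*(3*t^2) = e*(u^3 + 3*u*(1-u)*s)"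
      by auto
    hence b: "b = e*(s - t)" by (simp add: algebra_simps)
    have "e*(s*(1 - 2*t) + t^2) = 0" using h(3) h(1) b by (simp add: algebra_simps power2_eq_square)
    hence E1: "s*(1 - 2*t) + t^2 = 0" using e by simp
    have "e*(u^3 + 3*u*(1-u)*s - 3*s*t^2 + 2*t^3) = 0" using h(4) h(1) b
      by (simp add: algebra_simps power2_eq_square power3_eq_cube)
    hence E2: "u^3 + 3*u*(1-u)*s - 3*s*t^2 + 2*t^3 = 0" using e by simp
    have "t = u" by (rule quartic_root[OF E1 E2])
    thus "G s u = 0" using E1 Gu by (simp add: algebra_simps power2_eq_square)
  next
    assume "G s u = 0"
    hence us: "u^2 = s*(2*u - 1)" using Gu three by simp
    have w: "add4 (scal4 1 (1, u, u^2, u^3)) (scal4 (s - u) (0, 1, 2*u, 3*u^2)) = scal4 1 (lv (Some s))"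
    proof -
      have "u^2 + (s - u)*(2*u) = s" using us by (simp add: algebra_simps power2_eq_square)
      moreover have "u^3 + (s - u)*(3*u^2) = u^3 + 3*u*(1-u)*s"
      proof -
        have "u^3 + (s-u)*(3*u^2) - (u^3 + 3*u*(1-u)*s) = 3*u*(s*(2*u-1) - u^2)"
          by (simp add: algebra_simps power2_eq_square power3_eq_cube)
        thus ?thesis using us by simp
      qed
      ultimately show ?thesis by simp
    qed
    show "\<exists>L\<in>tangent_lines. proj (lv (Some s)) \<in> L" unfolding tangent_iff
      apply (rule exI[of _ u], rule exI[of _ 1], rule exI[of _ "s - u"], rule exI[of _ 1], rule conjI)
      using w by simp_all
  qed
qed

lemma tangent_N: "(\<exists>L\<in>tangent_lines. proj (lv None) \<in> L) \<longleftrightarrow> 2*u = 1"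
proof
  assume "\<exists>L\<in>tangent_lines. proj (lv None) \<in> L"
  then obtain t a b e where e: "e \<noteq> 0"
    "add4 (scal4 a (1, t, t^2, t^3)) (scal4 b (0, 1, 2*t, 3*t^2)) = scal4 e (lv None)"
    unfolding tangent_iff by blast
  hence h: "a = 0" "b = e" "b*(2*t) = e" "b*(3*t^2) = e*(3*u*(1-u))"
    by auto
  hence t: "2*t = 1" using e by simp
  have "3*t^2 = 3*u*(1-u)" using h e by simp
  hence "4*(3*t^2) = 4*(3*u*(1-u))" by (simp only:)
  hence A: "3*(2*t)^2 = 4*(3*u*(1-u))" by (simp add: power2_eq_square algebra_simps)
  have B: "3*(2*t)^2 = 3" using t by simp
  have "3*(2*u-1)^2 = 3 - 4*(3*u*(1-u))" by (simp add: algebra_simps power2_eq_square)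
  also have "\<dots> = 0" using A B by (metis diff_self)
  finally have "3*(2*u - 1)^2 = 0" .
  thus "2*u = 1" using three by simp
next
  assume u: "2*u = 1"
  have w: "add4 (scal4 0 (1, u, u^2, u^3)) (scal4 1 (0, 1, 2*u, 3*u^2)) = scal4 1 (lv None)"
  proof -
    have "3*u*(1-u) - 3*u^2 = 3*u*(1 - 2*u)" by (simp add: algebra_simps power2_eq_square)
    moreover have "3*u*(1 - 2*u) = 0" using u by simp
    ultimately have "3*u^2 = 3*u*(1-u)" by (metis eq_iff_diff_eq_0)
    thus ?thesis using u by simp
  qed
  show "\<exists>L\<in>tangent_lines. proj (lv None) \<in> L" unfolding tangent_iff
    apply (rule exI[of _ u], rule exI[of _ 0], rule exI[of _ 1], rule exI[of _ 1], rule conjI)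
    using w by simp_all
qed

end

context setting begin

lemma pt_class_simps:
  "pt_class 1 = twisted_cubic"
  "pt_class 2 = {P \<in> PG3. P \<notin> twisted_cubic \<and> (\<exists>L\<in>tangent_lines. P \<in> L)}"
  "pt_class 3 = {P \<in> PG3. P \<notin> twisted_cubic \<and> n_osc P = 3}"
  "pt_class 4 = {P \<in> PG3. P \<notin> twisted_cubic \<and> n_osc P = 1}"
  "pt_class 5 = {P \<in> PG3. n_osc P = 0}"
  by (simp_all add: pt_class_def)

lemma lvPG3: "proj (lv x) \<in> PG3" by (rule proj_in_PG3[OF lv_nz])

definition S where "S = card {s. is_square (D s)}"

lemma Gu0: "G s u = 0 \<longleftrightarrow> s*(2*u - 1) = u^2"
proof -
  have "G s u = 3*(u^2 - s*(2*u - 1))" unfolding G_def by (simp add: algebra_simps power2_eq_square)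
  thus ?thesis using three by auto
qed

lemma card_Gu0: "card {s. G s u = 0} = (if 2*u = 1 then 0 else 1)"
proof (cases "2*u = 1")
  case True
  have "u^2 \<noteq> 0" using u_nz by simp
  hence "{s. G s u = 0} = {}" unfolding Gu0 using True by auto
  thus ?thesis using True by simp
next
  case False
  hence "2*u - 1 \<noteq> 0" by simp
  hence "{s. G s u = 0} = {u^2/(2*u - 1)}" unfolding Gu0 by (auto simp: field_simps)
  thus ?thesis using False by simp
qed

lemma Gu0_sq: "G s u = 0 \<Longrightarrow> is_square (D s)"
  unfolding G_iff is_square_def by metis

lemma c1: "card {x. proj (lv x) \<in> pt_class 1} = 0"
proof -
  have "{x. proj (lv x) \<in> pt_class 1} = {}" unfolding pt_class_simps(1) using not_cubic by blast
  thus ?thesis by (simp only: card.empty)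
qed

lemma c2: "card {x. proj (lv x) \<in> pt_class 2} = 1"
proof -
  have "card {x. proj (lv x) \<in> pt_class 2} = card {s. G s u = 0} + (if 2*u = 1 then 1 else 0)"
    by (subst card_option) (simp del: lv_simps add: pt_class_simps lvPG3 not_cubic tangent_S tangent_N)
  thus ?thesis using card_Gu0 by simp
qed

lemma c3: "card {x. proj (lv x) \<in> pt_class 3} = S"
proof -
  have "card {x. proj (lv x) \<in> pt_class 3} = card {s. is_square (D s) \<and> G s u \<noteq> 0} + (if 2*u = 1 then 0 else 1)"
  proof -
    have m: "proj (lv (Some s)) \<in> pt_class 3 \<longleftrightarrow> is_square (D s) \<and> G s u \<noteq> 0" for s
      by (auto simp del: lv_simps simp: pt_class_simps lvPG3 not_cubic n_osc_S)
    have n: "proj (lv None) \<in> pt_class 3 \<longleftrightarrow> 2*u \<noteq> 1"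
      by (auto simp del: lv_simps simp: pt_class_simps lvPG3 not_cubic n_osc_N)
    show ?thesis by (subst card_option) (simp only: m n if_not_P if_P, auto)
  qed
  moreover have "{s. is_square (D s) \<and> G s u \<noteq> 0} = {s. is_square (D s)} - {s. G s u = 0}" by auto
  moreover have "{s. G s u = 0} \<subseteq> {s. is_square (D s)}" using Gu0_sq by auto
  ultimately have "card {x. proj (lv x) \<in> pt_class 3} = S - card {s. G s u = 0} + (if 2*u = 1 then 0 else 1)"
    unfolding S_def by (simp add: card_Diff_subset)
  moreover have "card {s. G s u = 0} \<le> S" unfolding S_def
    using \<open>{s. G s u = 0} \<subseteq> {s. is_square (D s)}\<close> by (intro card_mono) auto
  ultimately show ?thesis using card_Gu0 by (auto split: if_splits)
qed

lemma c4: "card {x. proj (lv x) \<in> pt_class 4} = card (UNIV::'a set) - S"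
proof -
  have "card {x. proj (lv x) \<in> pt_class 4} = card {s. \<not> is_square (D s)}"
    by (subst card_option) (simp del: lv_simps add: pt_class_simps lvPG3 not_cubic n_osc_S n_osc_N)
  also have "{s. \<not> is_square (D s)} = UNIV - {s. is_square (D s)}" by auto
  finally show ?thesis unfolding S_def by (simp add: card_Diff_subset)
qed

lemma c5: "card {x. proj (lv x) \<in> pt_class 5} = 0"
proof -
  have "n_osc (proj (lv x)) \<noteq> 0" for x
    by (cases x) (simp_all del: lv_simps add: n_osc_S n_osc_N)
  thus ?thesis by (simp add: pt_class_simps)
qed

lemma twoS: "2 * S = card (UNIV::'a set) - 1"
proof -
  let ?e = "u^2 - u + 1"
  have Dform: "D s = (3*s + u - 2)^2 - 4*?e" for s
    unfolding D_def by (simp add: algebra_simps power2_eq_square)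
  have "card {(s,y). y^2 = D s} = (\<Sum>s\<in>UNIV. card {y. y^2 = D s})"
  proof -
    have "{(s,y). y^2 = D s} = Sigma UNIV (\<lambda>s. {y. y^2 = D s})" by auto
    thus ?thesis by (simp add: card_SigmaI)
  qed
  also have "\<dots> = (\<Sum>s\<in>UNIV. if is_square (D s) then 2 else 0)"
    using sq_roots_card[OF two D_nz] by simp
  also have "\<dots> = 2 * S" unfolding S_def by (simp add: sum.If_cases)
  finally have a: "card {(s,y). y^2 = D s} = 2 * S" .
  have k0: "3*((x - u + 2)/3) = x - u + 2" for x
    using three by (metis nonzero_mult_div_cancel_left times_divide_eq_right)
  have k: "3*((x - u + 2)/3) + u - 2 = x" for x unfolding k0 by simp
  have "bij_betw (\<lambda>(s,y). (3*s + u - 2, y)) {(s,y). y^2 = D s} {(x,y). x^2 - 1*y^2 = 4*?e}"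
  proof (rule bij_betw_byWitness[where f'="\<lambda>(x,y). ((x - u + 2)/3, y)"])
    show "\<forall>p\<in>{(s,y). y^2 = D s}. (\<lambda>(x,y). ((x - u + 2)/3, y)) ((\<lambda>(s,y). (3*s + u - 2, y)) p) = p"
      using three by auto
    show "\<forall>p\<in>{(x,y). x^2 - 1*y^2 = 4*?e}. (\<lambda>(s,y). (3*s + u - 2, y)) ((\<lambda>(x,y). ((x - u + 2)/3, y)) p) = p"
      by (auto simp only: k split: prod.splits)
    show "(\<lambda>(s,y). (3*s + u - 2, y)) ` {(s,y). y^2 = D s} \<subseteq> {(x,y). x^2 - 1*y^2 = 4*?e}"
      using Dform by auto
    show "(\<lambda>(x,y). ((x - u + 2)/3, y)) ` {(x,y). x^2 - 1*y^2 = 4*?e} \<subseteq> {(s,y). y^2 = D s}"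
    proof
      fix p assume "p \<in> (\<lambda>(x,y). ((x - u + 2)/3, y)) ` {(x,y). x^2 - 1*y^2 = 4*?e}"
      then obtain x y where xy: "x^2 - 1*y^2 = 4*?e" "p = ((x - u + 2)/3, y)" by auto
      have "3*((x - u + 2)/3) + u - 2 = x" by (rule k)
      hence "D ((x - u + 2)/3) = x^2 - 4*?e" using Dform by simp
      thus "p \<in> {(s,y). y^2 = D s}" using xy by (simp add: algebra_simps)
    qed
  qed
  hence "card {(s,y). y^2 = D s} = card {(x,y). x^2 - 1*y^2 = 4*?e}" by (rule bij_betw_same_card)
  also have "\<dots> = card (UNIV::'a set) - 1"
  proof -
    have "4*?e \<noteq> 0" using four_nz e_nz by (simp only: mult_eq_0_iff) simp
    moreover have "is_square (1::'a)" unfolding is_square_def by (intro exI[of _ 1]) simp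
    ultimately show ?thesis using conic_count[OF two one_neq_zero] by simp
  qed
  finally show ?thesis using a by simp
qed

end

context setting begin

definition pvec :: "'a option \<Rightarrow> 'a vec4" where
  "pvec x = (case x of Some c \<Rightarrow> (- c*u^3, 3*c*u^2 + 1, - 3*c*u - 1, c) | None \<Rightarrow> (- (u^3), 3 * u^2, - 3 * u, 1))"

lemma pvec_simps[simp]: "pvec (Some c) = (- c*u^3, 3*c*u^2 + 1, - 3*c*u - 1, c)"
  "pvec None = (- (u^3), 3 * u^2, - 3 * u, 1)"
  by (auto simp: pvec_def)

lemma pvec_nz: "pvec x \<noteq> (0,0,0,0)"
  by (cases x) auto

lemma dot_pvec_lv: "dot4 (pvec x) (lv y) = 0"
  by (cases x; cases y) (simp_all add: algebra_simps power2_eq_square power3_eq_cube)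

lemma planes_eq: "{H \<in> PG3. \<forall>P\<in>ell u. on_plane P H} = range (\<lambda>x. proj (pvec x))"
proof (rule set_eqI, rule iffI)
  fix H assume H: "H \<in> {H \<in> PG3. \<forall>P\<in>ell u. on_plane P H}"
  then obtain g where g: "g \<noteq> (0,0,0,0)" "H = proj g" unfolding PG3_def by blast
  have "\<forall>x. on_plane (proj (lv x)) H" using H unfolding ell_eq by blast
  hence dg: "dot4 g (lv x) = 0" for x using g(2) on_plane_proj by metis
  obtain a b c d where abcd: "g = (a,b,c,d)" by (cases g)
  have e1: "b + c + 3*u*(1-u)*d = 0" using dg[of None] abcd by (simp add: algebra_simps)
  have e2: "a + d*u^3 = 0" using dg[of "Some 0"] abcd by (simp add: algebra_simps)
  define f where "f = b - 3*u^2*d"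
  show "H \<in> range (\<lambda>x. proj (pvec x))"
  proof (cases "f = 0")
    case False
    have "g = scal4 f (pvec (Some (d/f)))"
    proof -
      have "f * (- (d/f)*u^3) = - (d*u^3)" using False by (simp add: field_simps)
      also have "\<dots> = a" using e2 by (metis add.commute add_eq_0_iff)
      finally have "f * (- (d/f)*u^3) = a" .
      moreover have "f * (3*(d/f)*u^2 + 1) = b" using False unfolding f_def by (simp add: field_simps)
      moreover have "f * (- 3*(d/f)*u - 1) = c"
      proof -
        have "f * (- 3*(d/f)*u - 1) = - 3*d*u - f" using False by (simp add: field_simps)
        also have "\<dots> = c" using e1 unfolding f_def by algebra
        finally show ?thesis .
      qed
      moreover have "f * (d/f) = d" using False by simp
      ultimately show ?thesis using abcd by simp
    qed
    hence "H = proj (pvec (Some (d/f)))" using g(2) proj_scal False by metis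
    thus ?thesis by blast
  next
    case True
    have d0: "d \<noteq> 0"
    proof
      assume "d = 0"
      hence "a = 0" "b = 0" "c = 0" using e1 e2 True unfolding f_def by auto
      thus False using g(1) abcd \<open>d = 0\<close> by simp
    qed
    have "g = scal4 d (pvec None)"
    proof -
      have "c = - 3*u*d" using e1 True unfolding f_def by algebra
      moreover have "a = d*(-(u^3))" using e2 by algebra
      moreover have "b = d*(3*u^2)" using True unfolding f_def by (simp add: algebra_simps)
      ultimately show ?thesis using abcd by (simp add: algebra_simps)
    qed
    hence "H = proj (pvec None)" using g(2) proj_scal d0 by metis
    thus ?thesis by blast
  qed
next
  fix H assume "H \<in> range (\<lambda>x. proj (pvec x))"
  then obtain x where x: "H = proj (pvec x)" by blast
  show "H \<in> {H \<in> PG3. \<forall>P\<in>ell u. on_plane P H}"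
    unfolding ell_eq using x proj_in_PG3[OF pvec_nz] dot_pvec_lv by (auto simp: on_plane_proj)
qed

lemma inj_pvec: "inj (\<lambda>x. proj (pvec x))"
proof (rule injI)
  fix x y assume "proj (pvec x) = proj (pvec y)"
  then obtain e where e: "e \<noteq> 0" "pvec y = scal4 e (pvec x)" using proj_eqD by blast
  show "x = y"
  proof (cases x)
    case None
    show ?thesis
    proof (cases y)
      case (Some c')
      hence "c' = e" "3*c'*u^2 + 1 = e*(3*u^2)" using e None by auto
      thus ?thesis by simp
    qed (use None in simp)
  next
    case (Some c)
    show ?thesis
    proof (cases y)
      case None
      hence h: "1 = e*c" "3*u^2 = e*(3*c*u^2 + 1)" using e Some by auto
      have ec: "e*c = 1" using h(1) by simp
      have "e*(3*c*u^2 + 1) = 3*u^2*(e*c) + e" by (simp add: algebra_simps)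
      hence "3*u^2 = 3*u^2 + e" using h(2) ec by simp
      thus ?thesis using e by simp
    next
      case (Some c')
      hence h: "c' = e*c" "3*c'*u^2 + 1 = e*(3*c*u^2 + 1)" using e \<open>x = Some c\<close> by auto
      hence "e = 1" by (simp add: algebra_simps)
      thus ?thesis using h Some \<open>x = Some c\<close> by simp
    qed
  qed
qed

end

context setting begin

definition A0 :: 'a where "A0 = u*(u-1)"
definition B0 :: 'a where "B0 = 2*u - 1"
definition Pw :: "'a \<Rightarrow> 'a" where "Pw w = A0*w^3 + B0*w^2 + w"
definition Qf :: "'a \<Rightarrow> 'a \<Rightarrow> 'a" where "Qf a b = A0*(a^2 + a*b + b^2) + B0*(a+b) + 1"
definition R :: "'a \<Rightarrow> 'a set" where "R c = {w. Pw w = c}"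

lemma A0_nz: "A0 \<noteq> 0" unfolding A0_def using u_nz u_n1 by simp

lemma Pdiff: "Pw a - Pw b = (a - b) * Qf a b"
  unfolding Pw_def Qf_def by (simp add: algebra_simps power2_eq_square power3_eq_cube)

lemma Qsym: "Qf a b = Qf b a" unfolding Qf_def by (simp add: algebra_simps)

lemma Qshift: "Qf a w - Qf a b = (w - b) * (A0*(w + a + b) + B0)"
  unfolding Qf_def by (simp add: algebra_simps power2_eq_square)

lemma Qdiag: "Qf w w \<noteq> 0"
proof
  assume h: "Qf w w = 0"
  have "3*A0*Qf w w = (3*A0*w + B0)^2 - (u^2 - u + 1)"
    unfolding Qf_def A0_def B0_def by (simp add: algebra_simps power2_eq_square)
  hence "u^2 - u + 1 = (3*A0*w + B0)^2" using h by simp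
  thus False using nsq unfolding is_square_def by blast
qed

lemma Pw_eq_iff: "Pw a = Pw b \<longleftrightarrow> a = b \<or> Qf a b = 0"
  using Pdiff[of a b] by (metis eq_iff_diff_eq_0 mult_eq_0_iff)

lemma card_R: "card (R c) = 0 \<or> card (R c) = 1 \<or> card (R c) = 3"
proof (rule ccontr)
  assume nc: "\<not> (card (R c) = 0 \<or> card (R c) = 1 \<or> card (R c) = 3)"
  hence "R c \<noteq> {}" by auto
  then obtain a where a: "a \<in> R c" by blast
  have cd: "card (R c - {a}) = card (R c) - 1" using a by (simp add: card_Diff_singleton)
  have "card (R c - {a}) \<noteq> 0" unfolding cd using nc by linarith
  hence "R c - {a} \<noteq> {}" by auto
  then obtain b where b: "b \<in> R c" "b \<noteq> a" by blast
  define r where "r = -(a+b) - B0/A0"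
  have rr: "A0*(r + a + b) + B0 = 0" unfolding r_def using A0_nz by (simp add: field_simps)
  have Pab: "Pw a = c" "Pw b = c" using a b unfolding R_def by auto
  have Qab: "Qf a b = 0" using Pab b(2) Pw_eq_iff by metis
  have sub: "R c \<subseteq> {a, b, r}"
  proof
    fix w assume w: "w \<in> R c"
    show "w \<in> {a, b, r}"
    proof (cases "w = a \<or> w = b")
      case True thus ?thesis by auto
    next
      case False
      have "Pw a = Pw w" using w Pab unfolding R_def by simp
      hence "Qf a w = 0" using False Pw_eq_iff by metis
      hence "(w - b) * (A0*(w + a + b) + B0) = 0" using Qshift[of a w b] Qab by simp
      hence "A0*(w + a + b) + B0 = 0" using False by simp
      moreover have "A0*(w - r) = (A0*(w + a + b) + B0) - (A0*(r + a + b) + B0)" by (simp add: algebra_simps)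
      ultimately have "A0*(w - r) = 0" using rr by simp
      hence "w = r" using A0_nz by simp
      thus ?thesis by simp
    qed
  qed
  have Qar: "Qf a r = 0" using Qshift[of a r b] rr Qab by simp
  have rr2: "A0*(r + b + a) + B0 = 0" using rr by (simp add: algebra_simps)
  have "Qf b r - Qf b a = 0" using Qshift[of b r a] rr2 by simp
  hence Qbr: "Qf b r = 0" using Qab Qsym[of a b] by simp
  have "Pw a = Pw r" using Pw_eq_iff[of a r] Qar by blast
  hence rR: "r \<in> R c" using Pab unfolding R_def by simp
  have "r \<noteq> a" using Qar Qdiag[of a] by auto
  moreover have "r \<noteq> b" using Qbr Qdiag[of b] by auto
  ultimately have "R c = {a, b, r}" using sub a b rR by auto
  hence "card (R c) = 3" using \<open>r \<noteq> a\<close> \<open>r \<noteq> b\<close> b(2) by auto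
  thus False using nc by simp
qed

lemma fib_sum: "(\<Sum>w\<in>UNIV. f (Pw w)) = (\<Sum>c\<in>UNIV. card (R c) * f c)"
proof -
  have "(\<Sum>w\<in>UNIV. f (Pw w)) = (\<Sum>c\<in>UNIV. \<Sum>w\<in>{w\<in>UNIV. Pw w = c}. f (Pw w))"
    by (rule sum.group[symmetric]) auto
  also have "\<dots> = (\<Sum>c\<in>UNIV. card (R c) * f c)"
    unfolding R_def by (intro sum.cong) auto
  finally show ?thesis .
qed

end

context setting begin

lemma Q_conic:
  fixes w1 w2 :: 'a
  defines "k \<equiv> 2*B0/(3*A0)" and "m \<equiv> 4*(u^2 - u + 1)/(3*A0^2)"
  shows "(w1 - w2)^2 - (-3)*(w1 + w2 + k)^2 - m = (4/A0) * Qf w1 w2"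
proof -
  have e: "u^2 - u + 1 = B0^2 - 3*A0" unfolding A0_def B0_def by (simp add: algebra_simps power2_eq_square)
  have k3: "3*A0*k = 2*B0" unfolding k_def using A0_nz three by simp
  have m3: "3*A0^2*m = 4*(B0^2 - 3*A0)" unfolding m_def e using A0_nz three by simp
  have nz: "3*A0^2 \<noteq> 0" using A0_nz three by simp
  have "3*A0^2 * ((w1 - w2)^2 - (-3)*(w1 + w2 + k)^2 - m) = 12*A0 * Qf w1 w2"
    unfolding Qf_def using k3 m3 by algebra
  also have "\<dots> = 3*A0^2 * ((4/A0) * Qf w1 w2)" using A0_nz by (simp add: power2_eq_square)
  finally show ?thesis by (rule mult_left_cancel[OF nz, THEN iffD1])
qed

lemma card_E: "card {(w1,w2). Qf w1 w2 = 0} =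
   (if is_square (-3::'a) then card (UNIV::'a set) - 1 else card (UNIV::'a set) + 1)"
proof -
  define k where "k = 2*B0/(3*A0)"
  define m where "m = 4*(u^2 - u + 1)/(3*A0^2)"
  have m0: "m \<noteq> 0" unfolding m_def using four_nz e_nz three A0_nz
    by (simp only: divide_eq_0_iff mult_eq_0_iff power_eq_0_iff) simp
  have key: "Qf w1 w2 = 0 \<longleftrightarrow> (w1 - w2)^2 - (-3)*(w1 + w2 + k)^2 = m" for w1 w2
  proof -
    have "(w1 - w2)^2 - (-3)*(w1 + w2 + k)^2 - m = (4/A0) * Qf w1 w2"
      unfolding k_def m_def by (rule Q_conic)
    moreover have "4/A0 \<noteq> 0" using four_nz A0_nz by simp
    ultimately show ?thesis by (metis eq_iff_diff_eq_0 mult_eq_0_iff)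
  qed
  have "bij_betw (\<lambda>(w1,w2). (w1 - w2, w1 + w2 + k)) {(w1,w2). Qf w1 w2 = 0} {(x,y). x^2 - (-3)*y^2 = m}"
  proof (rule bij_betw_byWitness[where f'="\<lambda>(x,y). ((x + y - k)/2, (y - k - x)/2)"])
    show "\<forall>p\<in>{(w1,w2). Qf w1 w2 = 0}. (\<lambda>(x,y). ((x + y - k)/2, (y - k - x)/2)) ((\<lambda>(w1,w2). (w1 - w2, w1 + w2 + k)) p) = p"
      using two four_nz by (auto simp: field_simps)
    show "\<forall>p\<in>{(x,y). x^2 - (-3)*y^2 = m}. (\<lambda>(w1,w2). (w1 - w2, w1 + w2 + k)) ((\<lambda>(x,y). ((x + y - k)/2, (y - k - x)/2)) p) = p"
      using two four_nz by (auto simp: field_simps)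
    show "(\<lambda>(w1,w2). (w1 - w2, w1 + w2 + k)) ` {(w1,w2). Qf w1 w2 = 0} \<subseteq> {(x,y). x^2 - (-3)*y^2 = m}"
      using key by auto
    show "(\<lambda>(x,y). ((x + y - k)/2, (y - k - x)/2)) ` {(x,y). x^2 - (-3)*y^2 = m} \<subseteq> {(w1,w2). Qf w1 w2 = 0}"
    proof
      fix p assume "p \<in> (\<lambda>(x,y). ((x + y - k)/2, (y - k - x)/2)) ` {(x,y). x^2 - (-3)*y^2 = m}"
      then obtain x y where xy: "x^2 - (-3)*y^2 = m" "p = ((x + y - k)/2, (y - k - x)/2)" by auto
      have "(x + y - k)/2 - (y - k - x)/2 = x" using two four_nz by (simp add: field_simps)
      moreover have "(x + y - k)/2 + (y - k - x)/2 + k = y" using two four_nz by (simp add: field_simps)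
      ultimately show "p \<in> {(w1,w2). Qf w1 w2 = 0}" using key xy by simp
    qed
  qed
  hence "card {(w1,w2). Qf w1 w2 = 0} = card {(x,y). x^2 - (-3)*y^2 = m}" by (rule bij_betw_same_card)
  also have "\<dots> = (if is_square (-3::'a) then card (UNIV::'a set) - 1 else card (UNIV::'a set) + 1)"
  proof -
    have "(-3::'a) \<noteq> 0" using three by simp
    from conic_count[OF two this m0] show ?thesis .
  qed
  finally show ?thesis .
qed

end

context setting begin

definition N :: "'a \<Rightarrow> nat" where "N c = card (R c)"

lemma sum_ind: "(\<Sum>c\<in>UNIV. if P c then (k::nat) else 0) = k * card {c::'a. P c}"
  by (simp add: sum.If_cases)

lemma sumN: "(\<Sum>c\<in>UNIV. N c) = card (UNIV::'a set)"
  using fib_sum[of "\<lambda>_. 1"] unfolding N_def by simp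

lemma cardE_sum: "card {(w1,w2). Qf w1 w2 = 0} = (\<Sum>c\<in>UNIV. N c * (N c - 1))"
proof -
  have "{(w1,w2). Qf w1 w2 = 0} = Sigma UNIV (\<lambda>w1. R (Pw w1) - {w1})"
  proof (rule set_eqI)
    fix p :: "'a \<times> 'a"
    obtain w1 w2 where p: "p = (w1,w2)" by (cases p)
    have "Qf w1 w2 = 0 \<longleftrightarrow> w2 \<noteq> w1 \<and> Pw w2 = Pw w1"
      using Pw_eq_iff[of w2 w1] Qdiag[of w1] Qsym[of w1 w2] by auto
    thus "p \<in> {(w1,w2). Qf w1 w2 = 0} \<longleftrightarrow> p \<in> Sigma UNIV (\<lambda>w1. R (Pw w1) - {w1})"
      unfolding p R_def by auto
  qed
  hence "card {(w1,w2). Qf w1 w2 = 0} = (\<Sum>w1\<in>UNIV. card (R (Pw w1) - {w1}))"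
    by (simp add: card_SigmaI)
  also have "\<dots> = (\<Sum>w1\<in>UNIV. N (Pw w1) - 1)"
    unfolding N_def R_def by (intro sum.cong) (auto simp: card_Diff_singleton)
  also have "\<dots> = (\<Sum>c\<in>UNIV. card (R c) * (N c - 1))" by (rule fib_sum)
  finally show ?thesis unfolding N_def .
qed

definition T3 where "T3 = card {c::'a. N c = 3}"
definition T1 where "T1 = card {c::'a. N c = 1}"
definition T0 where "T0 = card {c::'a. N c = 0}"

lemma N_cases: "N c = 0 \<or> N c = 1 \<or> N c = 3" unfolding N_def by (rule card_R)

lemma sixT3: "6 * T3 = (if is_square (-3::'a) then card (UNIV::'a set) - 1 else card (UNIV::'a set) + 1)"
proof -
  have "(\<Sum>c\<in>UNIV. N c * (N c - 1)) = (\<Sum>c\<in>UNIV. if N c = 3 then 6 else 0)"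
    apply (intro sum.cong refl) subgoal for c using N_cases[of c] by auto done
  also have "\<dots> = 6 * T3" unfolding T3_def by (rule sum_ind)
  finally show ?thesis using cardE_sum card_E by simp
qed

lemma T31: "3 * T3 + T1 = card (UNIV::'a set)"
proof -
  have "(\<Sum>c\<in>UNIV. N c) = (\<Sum>c\<in>UNIV. (if N c = 3 then 3 else 0) + (if N c = 1 then 1 else 0))"
    apply (intro sum.cong refl) subgoal for c using N_cases[of c] by auto done
  also have "\<dots> = 3 * T3 + T1" unfolding sum.distrib T3_def T1_def sum_ind by simp
  finally show ?thesis using sumN by simp
qed

lemma T013: "T0 + T1 + T3 = card (UNIV::'a set)"
proof -
  have "(\<Sum>c\<in>(UNIV::'a set). 1::nat) = (\<Sum>c\<in>UNIV. (if N c = 0 then 1 else 0) + (if N c = 1 then 1 else 0) + (if N c = 3 then 1 else 0))"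
    apply (intro sum.cong refl) subgoal for c using N_cases[of c] by auto done
  also have "\<dots> = T0 + T1 + T3" unfolding sum.distrib T0_def T1_def T3_def sum_ind by simp
  finally show ?thesis by simp
qed

lemma key_id: "w \<noteq> 0 \<Longrightarrow> w^3 * (c*((u + 1/w) - u)^3 + (u + 1/w) - (u + 1/w)^2) = c - Pw w"
proof -
  assume w: "w \<noteq> 0"
  define z where "z = 1/w"
  have wz: "w*z = 1" unfolding z_def using w by simp
  have "w^3 * (c*((u + z) - u)^3 + (u + z) - (u + z)^2) = c - (A0*w^3 + B0*w^2 + w)"
    unfolding A0_def B0_def using wz by algebra
  thus ?thesis unfolding z_def Pw_def .
qed

lemma dot_pS_cS: "dot4 (pvec (Some c)) (cv (Some t)) = c*(t - u)^3 + t - t^2"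
  by (simp add: algebra_simps power2_eq_square power3_eq_cube)

lemma n_cubic_S: "n_cubic (proj (pvec (Some c))) = N c"
proof -
  let ?X = "{x. dot4 (pvec (Some c)) (cv x) = 0}"
  define \<alpha> where "\<alpha> x = (case x of None \<Rightarrow> 0 | Some t \<Rightarrow> 1/(t - u))" for x
  define \<beta> where "\<beta> w = (if w = 0 then None else Some (u + 1/w))" for w :: 'a
  have tu: "Some t \<in> ?X \<Longrightarrow> t \<noteq> u" for t
  proof
    assume "Some t \<in> ?X" "t = u"
    hence "u - u^2 = 0" using dot_pS_cS[of c t] by simp
    hence "u*(1 - u) = 0" by (simp add: algebra_simps power2_eq_square)
    thus False using u_nz u_n1 by simp
  qed
  have "bij_betw \<alpha> ?X (R c)"
  proof (rule bij_betw_byWitness[where f'=\<beta>])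
    show "\<forall>x\<in>?X. \<beta> (\<alpha> x) = x"
    proof
      fix x assume x: "x \<in> ?X"
      show "\<beta> (\<alpha> x) = x"
      proof (cases x)
        case None thus ?thesis unfolding \<alpha>_def \<beta>_def by simp
      next
        case (Some t)
        hence "t - u \<noteq> 0" using tu x by auto
        thus ?thesis unfolding \<alpha>_def \<beta>_def Some by simp
      qed
    qed
    show "\<forall>w\<in>R c. \<alpha> (\<beta> w) = w" unfolding \<alpha>_def \<beta>_def by simp
    show "\<alpha> ` ?X \<subseteq> R c"
    proof
      fix w assume "w \<in> \<alpha> ` ?X"
      then obtain x where x: "x \<in> ?X" "w = \<alpha> x" by blast
      show "w \<in> R c"
      proof (cases x)
        case None
        hence "c = 0" using x by simp
        thus ?thesis using x None unfolding \<alpha>_def R_def Pw_def by simp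
      next
        case (Some t)
        hence tu': "t - u \<noteq> 0" using tu x by auto
        hence w: "w = 1/(t - u)" "w \<noteq> 0" using x Some unfolding \<alpha>_def by auto
        have tt: "u + 1/w = t" using w tu' by simp
        have "c*(t - u)^3 + t - t^2 = 0" using x Some dot_pS_cS by simp
        hence "c - Pw w = 0" using key_id[OF w(2), of c] tt by simp
        thus ?thesis unfolding R_def by simp
      qed
    qed
    show "\<beta> ` R c \<subseteq> ?X"
    proof
      fix x assume "x \<in> \<beta> ` R c"
      then obtain w where w: "Pw w = c" "x = \<beta> w" unfolding R_def by blast
      show "x \<in> ?X"
      proof (cases "w = 0")
        case True
        hence "c = 0" using w unfolding Pw_def by simp
        thus ?thesis using w True unfolding \<beta>_def by simp
      next
        case False
        have "w^3 * (c*((u + 1/w) - u)^3 + (u + 1/w) - (u + 1/w)^2) = 0"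
          using key_id[OF False, of c] w by simp
        hence "c*((u + 1/w) - u)^3 + (u + 1/w) - (u + 1/w)^2 = 0" using False by simp
        thus ?thesis using w False unfolding \<beta>_def by (simp add: dot_pS_cS del: pvec_simps cv_simps)
      qed
    qed
  qed
  hence "card ?X = N c" unfolding N_def by (rule bij_betw_same_card)
  thus ?thesis by (simp only: n_cubic_proj)
qed

end

context setting begin

lemma pl_class_simps:
  "pl_class 1 = osc_planes"
  "pl_class 2 = {H \<in> PG3. n_cubic H = 2}"
  "pl_class 3 = {H \<in> PG3. n_cubic H = 3}"
  "pl_class 4 = {H \<in> PG3. H \<notin> osc_planes \<and> n_cubic H = 1}"
  "pl_class 5 = {H \<in> PG3. n_cubic H = 0}"
  "pl_class (Suc 0) = osc_planes"
  by (simp_all add: pl_class_def)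

lemma osc_PG3: "osc_planes \<subseteq> PG3"
  unfolding osc_planes_eq using proj_in_PG3[OF ov_nz] by blast

lemma pl_PG3: "i \<in> {1,2,3,4,5} \<Longrightarrow> pl_class i \<subseteq> PG3"
  using osc_PG3 by (auto simp: pl_class_simps)

lemma card_planes:
  assumes "i \<in> {1,2,3,4,5}"
  shows "card {H \<in> pl_class i. \<forall>P\<in>ell u. on_plane P H} = card {x. proj (pvec x) \<in> pl_class i}"
proof -
  have "{H \<in> pl_class i. \<forall>P\<in>ell u. on_plane P H} = {H \<in> range (\<lambda>x. proj (pvec x)). H \<in> pl_class i}"
    using planes_eq pl_PG3[OF assms] by blast
  thus ?thesis using card_range_filter[OF inj_pvec] by simp
qed

lemma pN_osc: "proj (pvec None) \<in> osc_planes"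
  unfolding osc_planes_def osc_plane_def by simp

lemma pS_not_osc: "proj (pvec (Some c)) \<notin> osc_planes"
proof
  assume "proj (pvec (Some c)) \<in> osc_planes"
  then obtain y where "proj (ov y) = proj (pvec (Some c))" unfolding osc_planes_eq by blast
  then obtain e where e: "e \<noteq> 0" "pvec (Some c) = scal4 e (ov y)" using proj_eqD by blast
  show False
  proof (cases y)
    case None
    hence "- 3*c*u - 1 = 0" "c = 0" using e by auto
    thus False by simp
  next
    case (Some t)
    hence h: "- c*u^3 = e*(- (t^3))" "3*c*u^2 + 1 = e*(3*t^2)" "- 3*c*u - 1 = e*(- 3*t)" "c = e"
      using e by auto
    have h1: "3*e*(t - u) = 1" using h(3) h(4) by (simp add: algebra_simps)
    hence tu: "t - u \<noteq> 0" by auto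
    have h2: "3*e*(t^2 - u^2) = 1" using h(2) h(4) by (simp add: algebra_simps)
    have "3*e*(t - u)*(t + u) = 3*e*(t^2 - u^2)" by (simp add: algebra_simps power2_eq_square)
    also have "\<dots> = 3*e*(t - u)*1" using h1 h2 by simp
    finally have "3*e*(t - u)*(t + u) = 3*e*(t - u)*1" .
    moreover have "3*e*(t - u) \<noteq> 0" using h1 by simp
    ultimately have tu1: "t + u = 1" using mult_left_cancel by blast
    have t3: "t^3 = u^3" using h(1) h(4) e(1) by simp
    have "(1 - u)^3 - u^3 = (1 - 2*u)*(u^2 - u + 1)"
      by (simp add: algebra_simps power2_eq_square power3_eq_cube)
    moreover have "(1 - u)^3 - u^3 = 0" using t3 tu1 by (metis add_diff_cancel_right' eq_iff_diff_eq_0)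
    moreover have "1 - 2*u \<noteq> 0" using tu tu1 by (metis add_diff_cancel_right' diff_diff_eq2 mult_2 right_minus_eq)
    ultimately have "u^2 - u + 1 = 0" by simp
    thus False using e_nz by simp
  qed
qed

lemma n_cubic_N: "n_cubic (proj (pvec None)) = 1"
proof -
  have "{x. dot4 (pvec None) (cv x) = 0} = {Some u}"
  proof (rule set_eqI)
    fix x show "x \<in> {x. dot4 (pvec None) (cv x) = 0} \<longleftrightarrow> x \<in> {Some u}"
    proof (cases x)
      case None thus ?thesis by simp
    next
      case (Some t)
      have "dot4 (pvec None) (cv (Some t)) = (t - u)^3"
        by (simp add: algebra_simps power2_eq_square power3_eq_cube)
      thus ?thesis using Some by simp
    qed
  qed
  thus ?thesis unfolding n_cubic_proj by simp
qed

lemma pPG3: "proj (pvec x) \<in> PG3" by (rule proj_in_PG3[OF pvec_nz])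

lemma N_ne2: "N c \<noteq> 2" using N_cases[of c] by auto

lemma OD2_eq: "OD2 (ell u) = [1, 0, T3, T1, T0]"
proof -
  have c1: "card {x. proj (pvec x) \<in> pl_class 1} = 1"
    by (subst card_option) (simp del: pvec_simps add: pl_class_simps pS_not_osc pN_osc)
  have c2: "card {x. proj (pvec x) \<in> pl_class 2} = 0"
    by (subst card_option) (simp del: pvec_simps add: pl_class_simps pPG3 n_cubic_S n_cubic_N N_ne2)
  have c3: "card {x. proj (pvec x) \<in> pl_class 3} = T3"
    by (subst card_option) (simp del: pvec_simps add: pl_class_simps pPG3 n_cubic_S n_cubic_N T3_def)
  have c4: "card {x. proj (pvec x) \<in> pl_class 4} = T1"
    by (subst card_option) (simp del: pvec_simps add: pl_class_simps pPG3 n_cubic_S n_cubic_N T1_def pS_not_osc pN_osc)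
  have c5: "card {x. proj (pvec x) \<in> pl_class 5} = T0"
    by (subst card_option) (simp del: pvec_simps add: pl_class_simps pPG3 n_cubic_S n_cubic_N T0_def)
  show ?thesis unfolding OD2_def using c1 c2 c3 c4 c5 card_planes by simp
qed

lemma OD0_eq: "OD0 (ell u) = [0, 1, S, card (UNIV::'a set) - S, 0]"
  unfolding OD0_def using c1 c2 c3 c4 c5 card_ell by simp

end


theorem mainTheorem6:
  fixes u :: "'a::{field,finite}"
  defines "q \<equiv> card (UNIV :: 'a set)"
  assumes "CHAR('a) \<noteq> 2" and "CHAR('a) \<noteq> 3"
    and "\<not> is_square (u^2 - u + 1)"
  shows "(is_square (-3 :: 'a) \<longrightarrow>
            OD2 (ell u) = [1, 0, (q - 1) div 6, (q + 1) div 2, (q - 1) div 3] \<and>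
            OD0 (ell u) = [0, 1, (q - 1) div 2, (q + 1) div 2, 0])
       \<and> (\<not> is_square (-3 :: 'a) \<longrightarrow>
            OD2 (ell u) = [1, 0, (q + 1) div 6, (q - 1) div 2, (q + 1) div 3] \<and>
            OD0 (ell u) = [0, 1, (q - 1) div 2, (q + 1) div 2, 0])"
proof -
  have two: "(2::'a) \<noteq> 0" and three: "(3::'a) \<noteq> 0"
    using char_ne[OF \<open>CHAR('a) \<noteq> 2\<close> \<open>CHAR('a) \<noteq> 3\<close>] by auto
  interpret setting u using two three \<open>\<not> is_square (u^2 - u + 1)\<close> by unfold_locales
  have S2: "2 * S = q - 1" using twoS unfolding q_def .
  have q1: "q \<ge> 1" unfolding q_def by (simp add: Suc_le_eq finite_UNIV_card_ge_0)
  have "S = (q - 1) div 2" "q - S = (q + 1) div 2" using S2 q1 by presburger+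
  hence od0: "OD0 (ell u) = [0, 1, (q - 1) div 2, (q + 1) div 2, 0]"
    using OD0_eq unfolding q_def[symmetric] by simp
  have t31: "3 * T3 + T1 = q" and t013: "T0 + T1 + T3 = q" using T31 T013 unfolding q_def by auto
  have six: "6 * T3 = (if is_square (-3::'a) then q - 1 else q + 1)" using sixT3 unfolding q_def .
  show ?thesis
  proof (intro conjI impI)
    assume sq: "is_square (-3::'a)"
    hence "6 * T3 = q - 1" using six by simp
    hence qq: "q = 6*T3 + 1" using q1 by linarith
    have a: "T1 = 3*T3 + 1" using t31 qq by linarith
    have b: "T0 = 2*T3" using t013 qq a by linarith
    have "T3 = (q - 1) div 6" unfolding qq by simp
    moreover have "T1 = (q + 1) div 2" unfolding qq a by presburger
    moreover have "T0 = (q - 1) div 3" unfolding qq b by presburger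
    ultimately have "T3 = (q - 1) div 6" "T1 = (q + 1) div 2" "T0 = (q - 1) div 3" by blast+
    thus "OD2 (ell u) = [1, 0, (q - 1) div 6, (q + 1) div 2, (q - 1) div 3]" using OD2_eq by simp
  next
    assume sq: "\<not> is_square (-3::'a)"
    hence qq: "6 * T3 = q + 1" using six by simp
    have a: "T1 + 3*T3 = q" using t31 by linarith
    have b: "T0 = 2*T3" using t013 qq a by linarith
    have "T3 = (q + 1) div 6" unfolding qq[symmetric] by simp
    moreover have "T1 = (q - 1) div 2" using qq a by presburger
    moreover have "T0 = (q + 1) div 3" unfolding qq[symmetric] b by presburger
    ultimately have "T3 = (q + 1) div 6" "T1 = (q - 1) div 2" "T0 = (q + 1) div 3" by blast+
    thus "OD2 (ell u) = [1, 0, (q + 1) div 6, (q - 1) div 2, (q + 1) div 3]" using OD2_eq by simp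
  qed (use od0 in auto)
qed


end
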